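(* Let $\mathcal{C}$ be a 2-D $(\lambda_1,\lambda_2)$-constacyclic code of area $M\times N$ over $\mathbb{F}_q$ with minimum Hamming distance $d$ and common zero set $V_c=\{(a_1,b_1),\dots,(a_s,b_s)\}$ (all lying in a finite extension field $\mathbb{F}$ of $\mathbb{F}_q$). Let $c\in\mathcal{C}$, and let $e$ be an $M\times N$ array over $\mathbb{F}_q$ whose set of nonzero positions is $\mathbb{E}=\{(i_1,j_1),\dots,(i_t,j_t)\}$ (distinct pairs), with $t\ge1$ and $t\le\lfloor (d-1)/2\rfloor$ (so in particular $t\le\lfloor s/2\rfloor$), and let $r=c+e$ with polynomial $r(x,y)=\sum_{i,j}r_{i,j}x^iy^j$. Then the linear system $AX=B$ in the unknowns $X=(X_1,\dots,X_t)^{T}$, where $A$ is the $s\times t$ matrix with entries $A_{k,l}=a_k^{i_l}b_k^{j_l}$ and $B=(r(a_1,b_1),\dots,r(a_s,b_s))^{T}$, is non-homogeneous and has a unique solution (namely $X_l=e_{i_l,j_l}$).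
   Context: An $M\times N$ array $c=(c_{i,j})$ over $\mathbb{F}_q$ is identified with $c(x,y)=\sum_{i,j}c_{i,j}x^iy^j$. For $\lambda_1,\lambda_2\in\mathbb{F}_q^{\ast}$, a 2-D $(\lambda_1,\lambda_2)$-constacyclic code of area $M\times N$ over $\mathbb{F}_q$ is an $\mathbb{F}_q$-linear subspace of $M\times N$ arrays closed under the column $\lambda_1$-constacyclic shift (row $0$ becomes $\lambda_1$ times row $M-1$, row $i$ becomes row $i-1$) and the row $\lambda_2$-constacyclic shift (column $0$ becomes $\lambda_2$ times column $N-1$, column $j$ becomes column $j-1$); equivalently an ideal of $\mathbb{F}_q[x,y]/\langle x^M-\lambda_1,y^N-\lambda_2\rangle$. Let $V_\circ=\{(a,b): a^M=\lambda_1,\ b^N=\lambda_2\}$ and $V_1$ the set of common roots of all $c(x,y)$, $c\in\mathcal{C}$; the common zero set is $V_c=V_\circ\cap V_1$. The minimum distance is the least Hamming weight (number of nonzero entries) of a nonzero codeword. Throughout, $M,N$ are coprime to the characteristic of $\mathbb{F}_q$. *)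

theory Defs
  imports Main
begin

definition is_array :: "nat \<Rightarrow> nat \<Rightarrow> (nat \<Rightarrow> nat \<Rightarrow> 'a::zero) \<Rightarrow> bool" where
  "is_array M N c \<longleftrightarrow> (\<forall>i j. (M \<le> i \<or> N \<le> j) \<longrightarrow> c i j = 0)"

definition col_shift :: "nat \<Rightarrow> 'a::field \<Rightarrow> (nat \<Rightarrow> nat \<Rightarrow> 'a) \<Rightarrow> (nat \<Rightarrow> nat \<Rightarrow> 'a)" where
  "col_shift M l c = (\<lambda>i j. if i = 0 then l * c (M - 1) j else if i < M then c (i - 1) j else 0)"

definition row_shift :: "nat \<Rightarrow> 'a::field \<Rightarrow> (nat \<Rightarrow> nat \<Rightarrow> 'a) \<Rightarrow> (nat \<Rightarrow> nat \<Rightarrow> 'a)" where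
  "row_shift N l c = (\<lambda>i j. if j = 0 then l * c i (N - 1) else if j < N then c i (j - 1) else 0)"

definition constacyclic_2D ::
  "nat \<Rightarrow> nat \<Rightarrow> 'a::field \<Rightarrow> 'a \<Rightarrow> (nat \<Rightarrow> nat \<Rightarrow> 'a) set \<Rightarrow> bool" where
  "constacyclic_2D M N l1 l2 C \<longleftrightarrow>
     (\<forall>c\<in>C. is_array M N c) \<and> (\<lambda>i j. 0) \<in> C \<and>
     (\<forall>c\<in>C. \<forall>c'\<in>C. (\<lambda>i j. c i j + c' i j) \<in> C) \<and>
     (\<forall>a. \<forall>c\<in>C. (\<lambda>i j. a * c i j) \<in> C) \<and>
     (\<forall>c\<in>C. col_shift M l1 c \<in> C) \<and>
     (\<forall>c\<in>C. row_shift N l2 c \<in> C)"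

definition hweight :: "nat \<Rightarrow> nat \<Rightarrow> (nat \<Rightarrow> nat \<Rightarrow> 'a::zero) \<Rightarrow> nat" where
  "hweight M N c = card {(i, j). i < M \<and> j < N \<and> c i j \<noteq> 0}"

definition is_min_dist :: "nat \<Rightarrow> nat \<Rightarrow> (nat \<Rightarrow> nat \<Rightarrow> 'a::zero) set \<Rightarrow> nat \<Rightarrow> bool" where
  "is_min_dist M N C d \<longleftrightarrow>
     (\<exists>c\<in>C. c \<noteq> (\<lambda>i j. 0) \<and> hweight M N c = d) \<and>
     (\<forall>c\<in>C. c \<noteq> (\<lambda>i j. 0) \<longrightarrow> d \<le> hweight M N c)"

definition field_emb :: "('a::field \<Rightarrow> 'b::field) \<Rightarrow> bool" where
  "field_emb emb \<longleftrightarrow> inj emb \<and> emb 0 = 0 \<and> emb 1 = 1 \<and>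
     (\<forall>x y. emb (x + y) = emb x + emb y) \<and> (\<forall>x y. emb (x * y) = emb x * emb y)"

definition eval2 :: "('a::field \<Rightarrow> 'b::field) \<Rightarrow> nat \<Rightarrow> nat \<Rightarrow> (nat \<Rightarrow> nat \<Rightarrow> 'a) \<Rightarrow> 'b \<Rightarrow> 'b \<Rightarrow> 'b" where
  "eval2 emb M N c a b = (\<Sum>i<M. \<Sum>j<N. emb (c i j) * a ^ i * b ^ j)"

definition V_circ :: "('a::field \<Rightarrow> 'b::field) \<Rightarrow> nat \<Rightarrow> nat \<Rightarrow> 'a \<Rightarrow> 'a \<Rightarrow> ('b \<times> 'b) set" where
  "V_circ emb M N l1 l2 = {(a, b). a ^ M = emb l1 \<and> b ^ N = emb l2}"

definition V_one :: "('a::field \<Rightarrow> 'b::field) \<Rightarrow> nat \<Rightarrow> nat \<Rightarrow> (nat \<Rightarrow> nat \<Rightarrow> 'a) set \<Rightarrow> ('b \<times> 'b) set" where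
  "V_one emb M N C = {(a, b). \<forall>c\<in>C. eval2 emb M N c a b = 0}"

definition V_common :: "('a::field \<Rightarrow> 'b::field) \<Rightarrow> nat \<Rightarrow> nat \<Rightarrow> 'a \<Rightarrow> 'a \<Rightarrow> (nat \<Rightarrow> nat \<Rightarrow> 'a) set \<Rightarrow> ('b \<times> 'b) set" where
  "V_common emb M N l1 l2 C = V_circ emb M N l1 l2 \<inter> V_one emb M N C"

end

theory Submission
  imports Defs "HOL-Computational_Algebra.Polynomial"
begin

lemma femb_simps:
  assumes "field_emb emb"
  shows "emb 0 = 0" "emb 1 = 1" "emb (x + y) = emb x + emb y" "emb (x * y) = emb x * emb y"
    "inj emb"
  using assms unfolding field_emb_def by auto

lemma exists_functional:
  fixes emb :: "'a::field \<Rightarrow> 'b::field"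
  assumes fe: "field_emb emb" and y: "y \<noteq> 0"
  shows "\<exists>\<phi>::'b\<Rightarrow>'a. (\<forall>u v. \<phi> (u+v) = \<phi> u + \<phi> v) \<and> (\<forall>a u. \<phi> (emb a * u) = a * \<phi> u) \<and> \<phi> y = 1"
proof -
  note fs = femb_simps[OF fe]
  interpret vector_space_pair "\<lambda>a x. emb a * x" "(*) :: 'a \<Rightarrow> 'a \<Rightarrow> 'a"
    by unfold_locales (auto simp: fs algebra_simps)
  have ind: "vs1.independent {y}" using y by (simp add: vs1.independent_insert vs1.span_empty)
  define \<phi> where "\<phi> = construct {y} (\<lambda>_. 1)"
  have lin: "Vector_Spaces.linear (\<lambda>a x. emb a * x) (*) \<phi>" unfolding \<phi>_def by (rule linear_construct[OF ind])
  have "\<phi> y = 1" unfolding \<phi>_def using construct_basis[OF ind] by simp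
  moreover have "\<phi> (u+v) = \<phi> u + \<phi> v" for u v using linear_add[OF lin] .
  moreover have "\<phi> (emb a * u) = a * \<phi> u" for a u using linear_scale[OF lin] by simp
  ultimately show ?thesis by blast
qed


lemma fermat_fin:
  fixes x :: "'b::{finite,field}"
  assumes "x \<noteq> 0"
  shows "x ^ (card (UNIV::'b set) - 1) = 1"
proof -
  let ?S = "UNIV - {0::'b}"
  have bij: "bij_betw (\<lambda>y. x * y) ?S ?S"
    unfolding bij_betw_def
  proof (intro conjI)
    show "inj_on ((*) x) ?S" using assms by (auto simp: inj_on_def)
    show "(*) x ` ?S = ?S"
    proof
      show "(*) x ` ?S \<subseteq> ?S" using assms by auto
      show "?S \<subseteq> (*) x ` ?S"
      proof
        fix z assume "z \<in> ?S"
        then have "z = x * (inverse x * z)" "inverse x * z \<in> ?S" using assms by auto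
        then show "z \<in> (*) x ` ?S" by blast
      qed
    qed
  qed
  have "(\<Prod>y\<in>?S. y) = (\<Prod>y\<in>?S. x * y)"
    using prod.reindex_bij_betw[OF bij, of "\<lambda>y. y"] by simp
  also have "\<dots> = x ^ card ?S * (\<Prod>y\<in>?S. y)" by (simp add: prod.distrib)
  finally have "x ^ card ?S = 1"
    by (metis (no_types, lifting) Diff_iff finite mult_cancel_right2 prod_zero_iff singletonI)
  moreover have "card ?S = card (UNIV::'b set) - 1" by (simp add: card_Diff_singleton)
  ultimately show ?thesis by simp
qed

lemma sum_pow_zero:
  fixes c :: "nat \<Rightarrow> 'b::field"
  assumes "finite R" "card R \<ge> n" "\<forall>x\<in>R. (\<Sum>i<n. c i * x ^ i) = 0" "i < n"
  shows "c i = 0"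
proof -
  define p where "p = (\<Sum>i<n. monom (c i) i)"
  have ev: "poly p x = (\<Sum>i<n. c i * x ^ i)" for x
    unfolding p_def by (simp add: poly_sum poly_monom)
  have co: "coeff p k = (if k < n then c k else 0)" for k
    unfolding p_def by (simp add: coeff_sum coeff_monom)
  have "p = 0"
  proof (rule ccontr)
    assume nz: "p \<noteq> 0"
    have "degree p \<le> n - 1"
      by (rule degree_le) (auto simp: co)
    moreover have "R \<subseteq> {x. poly p x = 0}" using assms(3) ev by auto
    hence "card R \<le> card {x. poly p x = 0}"
      by (intro card_mono poly_roots_finite nz)
    moreover have "card {x. poly p x = 0} \<le> degree p" by (rule card_poly_roots_bound[OF nz])
    ultimately show False using assms(2) assms(4) by linarith
  qed
  then show ?thesis using co[of i] assms(4) by simp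
qed

lemma sum2_zero:
  fixes f :: "nat \<Rightarrow> nat \<Rightarrow> 'b::field"
  assumes "finite A" "card A \<ge> M" "finite B" "card B \<ge> N"
    and "\<forall>a\<in>A. \<forall>b\<in>B. (\<Sum>i<M. \<Sum>j<N. f i j * a ^ i * b ^ j) = 0"
    and "i < M" "j < N"
  shows "f i j = 0"
proof -
  have "(\<Sum>j<N. f i j * b ^ j) = 0" if b: "b \<in> B" for b
  proof (rule sum_pow_zero[OF assms(1,2) _ assms(6), of "\<lambda>i. \<Sum>j<N. f i j * b ^ j"])
    show "\<forall>x\<in>A. (\<Sum>i<M. (\<Sum>j<N. f i j * b ^ j) * x ^ i) = 0"
    proof
      fix x assume "x \<in> A"
      have "(\<Sum>i<M. (\<Sum>j<N. f i j * b ^ j) * x ^ i) = (\<Sum>i<M. \<Sum>j<N. f i j * x ^ i * b ^ j)"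
        by (simp add: sum_distrib_right sum_distrib_left algebra_simps)
      then show "(\<Sum>i<M. (\<Sum>j<N. f i j * b ^ j) * x ^ i) = 0" using assms(5) b \<open>x \<in> A\<close> by simp
    qed
  qed
  then show ?thesis using sum_pow_zero[OF assms(3,4) _ assms(7), of "f i"] by auto
qed


lemma femb_diff: "field_emb emb \<Longrightarrow> emb (x - y) = emb x - emb y"
  by (metis diff_add_cancel eq_diff_eq femb_simps(3))

lemma femb_sum: "field_emb emb \<Longrightarrow> emb (\<Sum>k\<in>K. h k) = (\<Sum>k\<in>K. emb (h k))"
  by (induct K rule: infinite_finite_induct) (auto simp: femb_simps)

lemma field_emb_id: "field_emb id" by (simp add: field_emb_def)

lemma eval2_sum:
  assumes "field_emb emb"
  shows "eval2 emb M N (\<lambda>r s. \<Sum>k\<in>K. h k r s) a b = (\<Sum>k\<in>K. eval2 emb M N (h k) a b)"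
  unfolding eval2_def using assms
  by (simp add: femb_sum sum_distrib_right) (rule trans[OF sum.cong[OF refl] sum.swap], rule trans[OF sum.cong[OF refl] sum.swap], simp)

lemma eval2_scale:
  assumes "field_emb emb"
  shows "eval2 emb M N (\<lambda>r s. \<alpha> * h r s) a b = emb \<alpha> * eval2 emb M N h a b"
  unfolding eval2_def using assms by (simp add: femb_simps sum_distrib_left mult.assoc)

lemma eval2_add:
  assumes "field_emb emb"
  shows "eval2 emb M N (\<lambda>r s. f r s + g r s) a b = eval2 emb M N f a b + eval2 emb M N g a b"
  unfolding eval2_def using assms by (simp add: femb_simps sum.distrib algebra_simps)

lemma eval2_diff:
  assumes "field_emb emb"
  shows "eval2 emb M N (\<lambda>r s. f r s - g r s) a b = eval2 emb M N f a b - eval2 emb M N g a b"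
  unfolding eval2_def using assms by (simp add: femb_diff sum_subtractf algebra_simps)

lemma eval2_col_shift:
  assumes fe: "field_emb emb" and M: "M \<ge> 1" and a: "a ^ M = emb l"
  shows "eval2 emb M N (col_shift M l f) a b = a * eval2 emb M N f a b"
proof -
  obtain m where m: "M = Suc m" using M by (cases M) auto
  have "(\<Sum>i<M. emb (col_shift M l f i j) * a ^ i * b ^ j) = a * (\<Sum>i<M. emb (f i j) * a ^ i * b ^ j)" for j
  proof -
    have "(\<Sum>i<M. emb (col_shift M l f i j) * a ^ i * b ^ j) =
       emb (l * f m j) * b ^ j + (\<Sum>i<m. emb (f i j) * a ^ Suc i * b ^ j)"
      unfolding m by (subst sum.lessThan_Suc_shift) (simp add: col_shift_def)
    also have "\<dots> = a * (\<Sum>i<M. emb (f i j) * a ^ i * b ^ j)"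
      using a unfolding m by (simp add: sum_distrib_left femb_simps[OF fe] algebra_simps)
    finally show ?thesis .
  qed
  then show ?thesis unfolding eval2_def
    by (subst (1 2) sum.swap) (simp add: sum_distrib_left)
qed

lemma eval2_row_shift:
  assumes fe: "field_emb emb" and N: "N \<ge> 1" and b: "b ^ N = emb l"
  shows "eval2 emb M N (row_shift N l f) a b = b * eval2 emb M N f a b"
proof -
  obtain n where n: "N = Suc n" using N by (cases N) auto
  have "(\<Sum>j<N. emb (row_shift N l f i j) * a ^ i * b ^ j) = b * (\<Sum>j<N. emb (f i j) * a ^ i * b ^ j)" for i
  proof -
    have "(\<Sum>j<N. emb (row_shift N l f i j) * a ^ i * b ^ j) =
       emb (l * f i n) * a ^ i + (\<Sum>j<n. emb (f i j) * a ^ i * b ^ Suc j)"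
      unfolding n by (subst sum.lessThan_Suc_shift) (simp add: row_shift_def)
    also have "\<dots> = b * (\<Sum>j<N. emb (f i j) * a ^ i * b ^ j)"
      using b unfolding n by (simp add: sum_distrib_left femb_simps[OF fe] algebra_simps)
    finally show ?thesis .
  qed
  then show ?thesis unfolding eval2_def by (simp add: sum_distrib_left)
qed

lemma eval2_shifts:
  assumes fe: "field_emb emb" and M: "M \<ge> 1" and a: "a ^ M = emb l1"
    and N: "N \<ge> 1" and b: "b ^ N = emb l2"
  shows "eval2 emb M N ((col_shift M l1 ^^ i) ((row_shift N l2 ^^ j) f)) a b = a ^ i * b ^ j * eval2 emb M N f a b"
proof (induct i)
  case 0
  show ?case
    by (induct j) (simp_all add: eval2_row_shift[OF fe N b])
next
  case (Suc i)
  then show ?case by (simp add: eval2_col_shift[OF fe M a])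
qed

definition mul2 :: "nat \<Rightarrow> nat \<Rightarrow> 'c::field \<Rightarrow> 'c \<Rightarrow> (nat \<Rightarrow> nat \<Rightarrow> 'c) \<Rightarrow> (nat \<Rightarrow> nat \<Rightarrow> 'c) \<Rightarrow> (nat \<Rightarrow> nat \<Rightarrow> 'c)" where
  "mul2 M N l1 l2 f g = (\<lambda>r s. \<Sum>i<M. \<Sum>j<N. g i j * (col_shift M l1 ^^ i) ((row_shift N l2 ^^ j) f) r s)"

lemma eval2_mul2:
  assumes fe: "field_emb emb" and M: "M \<ge> 1" and a: "a ^ M = emb l1"
    and N: "N \<ge> 1" and b: "b ^ N = emb l2"
  shows "eval2 emb M N (mul2 M N l1 l2 f g) a b = eval2 emb M N f a b * eval2 emb M N g a b"
proof -
  have "eval2 emb M N (mul2 M N l1 l2 f g) a b =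
     (\<Sum>i<M. \<Sum>j<N. emb (g i j) * (a ^ i * b ^ j * eval2 emb M N f a b))"
    unfolding mul2_def
    by (simp add: eval2_sum[OF fe] eval2_scale[OF fe] eval2_shifts[OF fe M a N b])
  also have "\<dots> = eval2 emb M N f a b * eval2 emb M N g a b"
    unfolding eval2_def[of emb M N g] by (simp add: sum_distrib_left algebra_simps)
  finally show ?thesis .
qed

lemma C_sum:
  assumes C: "constacyclic_2D M N l1 l2 C" and "finite K" "\<forall>k\<in>K. h k \<in> C"
  shows "(\<lambda>r s. \<Sum>k\<in>K. h k r s) \<in> C"
  using assms(2,3)
proof (induct K rule: finite_induct)
  case empty then show ?case using C by (simp add: constacyclic_2D_def)
next
  case (insert x F)
  have hx: "h x \<in> C" and hF: "(\<lambda>r s. \<Sum>k\<in>F. h k r s) \<in> C" using insert by auto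
  have "\<forall>c\<in>C. \<forall>c'\<in>C. (\<lambda>i j. c i j + c' i j) \<in> C" using C unfolding constacyclic_2D_def by blast
  then have "(\<lambda>r s. h x r s + (\<Sum>k\<in>F. h k r s)) \<in> C"
    using hx hF by fastforce
  then show ?case using insert by simp
qed

lemma C_shifts:
  assumes C: "constacyclic_2D M N l1 l2 C" and f: "f \<in> C"
  shows "(col_shift M l1 ^^ i) ((row_shift N l2 ^^ j) f) \<in> C"
proof (induct i)
  case 0
  show ?case using C f by (induct j) (auto simp: constacyclic_2D_def)
next
  case (Suc i) then show ?case using C by (auto simp: constacyclic_2D_def)
qed

lemma C_mul2:
  assumes C: "constacyclic_2D M N l1 l2 C" and f: "f \<in> C"
  shows "mul2 M N l1 l2 f g \<in> C"
  unfolding mul2_def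
proof (intro C_sum[OF C] ballI finite_lessThan)
  fix i j
  have "(\<lambda>r s. g i j * (col_shift M l1 ^^ i) ((row_shift N l2 ^^ j) f) r s) \<in> C"
    using C_shifts[OF C f, of i j] C unfolding constacyclic_2D_def by blast
  then show "(\<lambda>a b. g i j * (col_shift M l1 ^^ i) ((row_shift N l2 ^^ j) f) a b) \<in> C" .
qed

lemma array_col_shift: "is_array M N f \<Longrightarrow> is_array M N (col_shift M l f)"
  unfolding is_array_def col_shift_def by auto

lemma array_row_shift: "is_array M N f \<Longrightarrow> is_array M N (row_shift N l f)"
  unfolding is_array_def row_shift_def by auto

lemma array_shifts: "is_array M N f \<Longrightarrow> is_array M N ((col_shift M l1 ^^ i) ((row_shift N l2 ^^ j) f))"
proof (induct i)
  case 0 then show ?case by (induct j) (auto intro: array_row_shift)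
next
  case (Suc i) then show ?case by (auto intro: array_col_shift)
qed

lemma array_mul2: "is_array M N f \<Longrightarrow> is_array M N (mul2 M N l1 l2 f g)"
  using array_shifts[of M N f] unfolding is_array_def mul2_def by simp


lemma eval_inj:
  fixes emb :: "'a::field \<Rightarrow> 'b::field" and L1 L2 :: 'b
  assumes fe: "field_emb emb" and M: "M \<ge> 1" and N: "N \<ge> 1"
    and cA: "card {a::'b. a ^ M = L1} = M" and cB: "card {b::'b. b ^ N = L2} = N"
    and f: "is_array M N f" and g: "is_array M N g"
    and ev: "\<forall>a b. a ^ M = L1 \<longrightarrow> b ^ N = L2 \<longrightarrow> eval2 emb M N f a b = eval2 emb M N g a b"
  shows "f = g"
proof (intro ext)
  fix i j
  show "f i j = g i j"
  proof (cases "i < M \<and> j < N")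
    case True
    have finA: "finite {a::'b. a ^ M = L1}" using cA M by (intro card_ge_0_finite) auto
    have finB: "finite {b::'b. b ^ N = L2}" using cB N by (intro card_ge_0_finite) auto
    have "emb (f i j) - emb (g i j) = 0"
    proof (rule sum2_zero[OF finA _ finB, of M N], use cA cB True in simp_all)
      show "\<forall>a. a ^ M = L1 \<longrightarrow> (\<forall>b. b ^ N = L2 \<longrightarrow>
          (\<Sum>i<M. \<Sum>j<N. (emb (f i j) - emb (g i j)) * a ^ i * b ^ j) = 0)"
      proof (intro allI impI)
        fix a b assume "a ^ M = L1" "b ^ N = L2"
        then have "eval2 emb M N f a b - eval2 emb M N g a b = 0" using ev by simp
        then show "(\<Sum>i<M. \<Sum>j<N. (emb (f i j) - emb (g i j)) * a ^ i * b ^ j) = 0"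
          unfolding eval2_def by (simp add: sum_subtractf algebra_simps)
      qed
    qed
    then show ?thesis using femb_simps(5)[OF fe] by (simp add: inj_eq)
  next
    case False
    then show ?thesis using f g unfolding is_array_def by auto
  qed
qed

lemma mul2_comm:
  fixes emb :: "'a::field \<Rightarrow> 'b::field"
  assumes fe: "field_emb emb" and M: "M \<ge> 1" and N: "N \<ge> 1"
    and cA: "card {a::'b. a ^ M = emb l1} = M" and cB: "card {b::'b. b ^ N = emb l2} = N"
    and f: "is_array M N f" and g: "is_array M N g"
  shows "mul2 M N l1 l2 f g = mul2 M N l1 l2 g f"
  by (rule eval_inj[OF fe M N cA cB array_mul2[OF f] array_mul2[OF g]])
     (simp add: eval2_mul2[OF fe M _ N] mult.commute)

lemma eval_support:
  assumes fe: "field_emb emb" and inj: "inj_on (\<lambda>l. (ei l, ej l)) {..<t}"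
    and rng: "\<forall>l<t. ei l < M \<and> ej l < N"
    and supp: "\<forall>i<M. \<forall>j<N. W i j \<noteq> 0 \<longrightarrow> (\<exists>l<t. (i, j) = (ei l, ej l))"
  shows "eval2 emb M N W a b = (\<Sum>l<t. emb (W (ei l) (ej l)) * a ^ (ei l) * b ^ (ej l))"
proof -
  let ?T = "(\<lambda>l. (ei l, ej l)) ` {..<t}"
  have "eval2 emb M N W a b = (\<Sum>(i,j)\<in>{..<M} \<times> {..<N}. emb (W i j) * a ^ i * b ^ j)"
    unfolding eval2_def by (simp add: sum.cartesian_product)
  also have "\<dots> = (\<Sum>(i,j)\<in>?T. emb (W i j) * a ^ i * b ^ j)"
  proof (rule sum.mono_neutral_right)
    show "?T \<subseteq> {..<M} \<times> {..<N}" using rng by auto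
    show "\<forall>x\<in>{..<M} \<times> {..<N} - ?T. (case x of (i, j) \<Rightarrow> emb (W i j) * a ^ i * b ^ j) = 0"
      using supp femb_simps(1)[OF fe] by fastforce
  qed simp
  also have "\<dots> = (\<Sum>l<t. emb (W (ei l) (ej l)) * a ^ (ei l) * b ^ (ej l))"
    by (subst sum.reindex[OF inj]) simp
  finally show ?thesis .
qed


lemma C_add: "constacyclic_2D M N l1 l2 C \<Longrightarrow> f \<in> C \<Longrightarrow> g \<in> C \<Longrightarrow> (\<lambda>i j. f i j + g i j) \<in> C"
  unfolding constacyclic_2D_def by blast

lemma C_scale: "constacyclic_2D M N l1 l2 C \<Longrightarrow> f \<in> C \<Longrightarrow> (\<lambda>i j. a * f i j) \<in> C"
  unfolding constacyclic_2D_def by blast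

lemma exists_E:
  fixes emb :: "'a::field \<Rightarrow> 'b::{finite,field}"
  assumes fe: "field_emb emb" and M: "M \<ge> 1" and N: "N \<ge> 1"
    and C: "constacyclic_2D M N l1 l2 C"
  shows "\<exists>E\<in>C. \<forall>P\<in>V_circ emb M N l1 l2 - V_common emb M N l1 l2 C. eval2 emb M N E (fst P) (snd P) = 1"
proof -
  let ?T = "V_circ emb M N l1 l2 - V_common emb M N l1 l2 C"
  have "T \<subseteq> ?T \<longrightarrow> (\<exists>E\<in>C. \<forall>P\<in>T. eval2 emb M N E (fst P) (snd P) = 1)" for T
  proof (induct T rule: infinite_finite_induct)
    case (infinite A) then show ?case by simp
  next
    case empty then show ?case using C unfolding constacyclic_2D_def by blast
  next
    case (insert P T)
    show ?case
    proof
      assume sub: "insert P T \<subseteq> ?T"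
      then obtain E where E: "E \<in> C" "\<forall>Q\<in>T. eval2 emb M N E (fst Q) (snd Q) = 1" using insert by auto
      obtain a b where P: "P = (a, b)" by (cases P)
      have Pc: "a ^ M = emb l1" "b ^ N = emb l2" "(a,b) \<notin> V_common emb M N l1 l2 C"
        using sub P by (auto simp: V_circ_def)
      then obtain g where g: "g \<in> C" "eval2 emb M N g a b \<noteq> 0"
        by (auto simp: V_common_def V_circ_def V_one_def)
      define h where "h k = ((\<lambda>x. mul2 M N l1 l2 x g) ^^ k) g" for k
      have hC: "h k \<in> C" for k unfolding h_def by (induct k) (auto simp: g C_mul2[OF C])
      have hev: "eval2 emb M N (h k) a' b' = eval2 emb M N g a' b' ^ Suc k"
        if "a' ^ M = emb l1" "b' ^ N = emb l2" for k a' b'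
        unfolding h_def by (induct k) (simp_all add: eval2_mul2[OF fe M that(1) N that(2)])
      define k where "k = card (UNIV::'b set) - 2"
      have c2: "card (UNIV::'b set) \<ge> 2"
      proof -
        have "{0::'b, 1} \<subseteq> UNIV" by simp
        then have "card {0::'b, 1} \<le> card (UNIV::'b set)" by (intro card_mono) auto
        then show ?thesis by simp
      qed
      have Sk: "Suc k = card (UNIV::'b set) - 1" unfolding k_def using c2 by simp
      let ?h = "h k"
      have h1: "eval2 emb M N ?h a b = 1" using hev[OF Pc(1,2), of k] Sk fermat_fin[OF g(2)] by (simp del: power_Suc)
      define E' where "E' = (\<lambda>i j. (\<lambda>i j. E i j + ?h i j) i j + (\<lambda>i j. (-1) * mul2 M N l1 l2 E ?h i j) i j)"
      have E'C: "E' \<in> C" unfolding E'_def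
        by (intro C_add[OF C] C_scale[OF C] C_mul2[OF C] E(1) hC)
      have evE': "eval2 emb M N E' a' b' = eval2 emb M N E a' b' + eval2 emb M N ?h a' b'
           - eval2 emb M N E a' b' * eval2 emb M N ?h a' b'"
        if "a' ^ M = emb l1" "b' ^ N = emb l2" for a' b'
        unfolding E'_def using fe
        by (simp add: eval2_diff[OF fe] eval2_add[OF fe] eval2_scale[OF fe] eval2_mul2[OF fe M that(1) N that(2)] femb_simps)
      show "\<exists>E\<in>C. \<forall>Q\<in>insert P T. eval2 emb M N E (fst Q) (snd Q) = 1"
      proof (intro bexI[OF _ E'C] ballI)
        fix Q assume Q: "Q \<in> insert P T"
        then have Qc: "fst Q ^ M = emb l1" "snd Q ^ N = emb l2" using sub by (auto simp: V_circ_def)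
        show "eval2 emb M N E' (fst Q) (snd Q) = 1"
        proof (cases "Q = P")
          case True then show ?thesis using evE'[OF Qc] h1 P by simp
        next
          case False then have "Q \<in> T" using Q by auto
          then show ?thesis using evE'[OF Qc] E(2) by simp
        qed
      qed
    qed
  qed
  moreover have "finite ?T" by simp
  ultimately show ?thesis by blast
qed


lemma phi_props:
  assumes add: "\<forall>u v. \<phi> (u+v) = \<phi> u + \<phi> v"
  shows "\<phi> 0 = (0::'a::ab_group_add)" "\<phi> (\<Sum>k\<in>K. h k) = (\<Sum>k\<in>K. \<phi> (h k))"
proof -
  have "\<phi> (0 + 0) = \<phi> 0 + \<phi> 0" using add by blast
  then show z: "\<phi> 0 = 0" by simp
  show "\<phi> (\<Sum>k\<in>K. h k) = (\<Sum>k\<in>K. \<phi> (h k))"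
    by (induct K rule: infinite_finite_induct) (simp_all add: z add)
qed

lemma phi_shifts:
  fixes emb :: "'a::field \<Rightarrow> 'b::field" and \<phi> :: "'b \<Rightarrow> 'a"
  assumes add: "\<forall>u v. \<phi> (u+v) = \<phi> u + \<phi> v" and sc: "\<forall>a u. \<phi> (emb a * u) = a * \<phi> u"
  shows "(\<lambda>r s. \<phi> ((col_shift M (emb l1) ^^ i) ((row_shift N (emb l2) ^^ j) W) r s))
       = (col_shift M l1 ^^ i) ((row_shift N l2 ^^ j) (\<lambda>r s. \<phi> (W r s)))"
proof (induct i)
  case 0
  show ?case
  proof (induct j)
    case (Suc j)
    then show ?case using phi_props(1)[OF add] sc
      by (simp add: row_shift_def fun_eq_iff)
  qed simp
next
  case (Suc i)
  then show ?case using phi_props(1)[OF add] sc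
    by (simp add: col_shift_def fun_eq_iff)
qed

lemma core_zero:
  fixes emb :: "'a::field \<Rightarrow> 'b::{finite,field}" and Y :: "nat \<Rightarrow> nat \<Rightarrow> 'b"
  assumes fe: "field_emb emb" and M: "M \<ge> 1" and N: "N \<ge> 1"
    and cA: "card {a::'b. a ^ M = emb l1} = M" and cB: "card {b::'b. b ^ N = emb l2} = N"
    and C: "constacyclic_2D M N l1 l2 C"
    and md: "is_min_dist M N C d"
    and Y: "is_array M N Y"
    and Yz: "\<forall>P\<in>V_common emb M N l1 l2 C. eval2 id M N Y (fst P) (snd P) = 0"
    and Ys: "card {(i, j). i < M \<and> j < N \<and> Y i j \<noteq> 0} < d"
  shows "Y = (\<lambda>i j. 0)"
proof (rule ccontr)
  assume "Y \<noteq> (\<lambda>i j. 0)"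
  then obtain p q where pq: "Y p q \<noteq> 0" by (auto simp: fun_eq_iff)
  then have pqr: "p < M" "q < N" using Y unfolding is_array_def by (meson not_le)+
  obtain E where E: "E \<in> C" "\<forall>P\<in>V_circ emb M N l1 l2 - V_common emb M N l1 l2 C. eval2 emb M N E (fst P) (snd P) = 1"
    using exists_E[OF fe M N C] by blast
  have Earr: "is_array M N E" using C E(1) unfolding constacyclic_2D_def by blast
  define Z where "Z = mul2 M N (emb l1) (emb l2) Y (\<lambda>i j. emb (E i j))"
  have idf: "field_emb (id :: 'b \<Rightarrow> 'b)" by (rule field_emb_id)
  have evE: "eval2 id M N (\<lambda>i j. emb (E i j)) a b = eval2 emb M N E a b" for a b
    unfolding eval2_def by simp
  have "Z = Y"
  proof (rule eval_inj[OF idf M N cA cB])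
    show "is_array M N Z" unfolding Z_def by (rule array_mul2[OF Y])
    show "is_array M N Y" by fact
    show "\<forall>a b. a ^ M = emb l1 \<longrightarrow> b ^ N = emb l2 \<longrightarrow> eval2 id M N Z a b = eval2 id M N Y a b"
    proof (intro allI impI)
      fix a b assume a: "a ^ M = emb l1" and b: "b ^ N = emb l2"
      have "eval2 id M N Z a b = eval2 id M N Y a b * eval2 emb M N E a b"
        unfolding Z_def using eval2_mul2[OF idf M _ N, of a "emb l1" b "emb l2"] a b evE by simp
      moreover have "eval2 id M N Y a b * eval2 emb M N E a b = eval2 id M N Y a b"
      proof (cases "(a, b) \<in> V_common emb M N l1 l2 C")
        case True then show ?thesis using Yz by force
      next
        case False then show ?thesis using E(2) a b by (force simp: V_circ_def)
      qed
      ultimately show "eval2 id M N Z a b = eval2 id M N Y a b" by simp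
    qed
  qed
  obtain \<phi> :: "'b \<Rightarrow> 'a" where add: "\<forall>u v. \<phi> (u+v) = \<phi> u + \<phi> v"
    and sc: "\<forall>a u. \<phi> (emb a * u) = a * \<phi> u" and ph1: "\<phi> (Y p q) = 1"
    using exists_functional[OF fe pq] by blast
  define y where "y = (\<lambda>i j. \<phi> (Y i j))"
  have yarr: "is_array M N y" using Y phi_props(1)[OF add] unfolding y_def is_array_def by simp
  have "(\<lambda>r s. \<phi> (Z r s)) = mul2 M N l1 l2 y E"
  proof (intro ext)
    fix r s
    have "\<phi> (Z r s) = (\<Sum>i<M. \<Sum>j<N. E i j * \<phi> ((col_shift M (emb l1) ^^ i) ((row_shift N (emb l2) ^^ j) Y) r s))"
      unfolding Z_def mul2_def by (simp add: phi_props(2)[OF add] sc)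
    also have "\<dots> = mul2 M N l1 l2 y E r s"
      unfolding mul2_def y_def
      by (intro sum.cong refl arg_cong2[where f="(*)"]) (simp add: phi_shifts[OF add sc, symmetric])
    finally show "\<phi> (Z r s) = mul2 M N l1 l2 y E r s" .
  qed
  also have "\<dots> = mul2 M N l1 l2 E y" by (rule mul2_comm[OF fe M N cA cB yarr Earr])
  finally have "(\<lambda>r s. \<phi> (Z r s)) = mul2 M N l1 l2 E y" .
  then have "y = mul2 M N l1 l2 E y" using \<open>Z = Y\<close> unfolding y_def by simp
  then have yC: "y \<in> C" using C_mul2[OF C E(1), of y] by simp
  have ynz: "y \<noteq> (\<lambda>i j. 0)" using ph1 unfolding y_def by (metis one_neq_zero)
  have "d \<le> hweight M N y" using md yC ynz unfolding is_min_dist_def by blast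
  moreover have "hweight M N y \<le> card {(i, j). i < M \<and> j < N \<and> Y i j \<noteq> 0}"
    unfolding hweight_def
  proof (rule card_mono)
    show "finite {(i, j). i < M \<and> j < N \<and> Y i j \<noteq> 0}"
      by (rule finite_subset[of _ "{..<M} \<times> {..<N}"]) auto
    show "{(i, j). i < M \<and> j < N \<and> y i j \<noteq> 0} \<subseteq> {(i, j). i < M \<and> j < N \<and> Y i j \<noteq> 0}"
      using phi_props(1)[OF add] unfolding y_def by auto
  qed
  ultimately show False using Ys by linarith
qed


theorem mainTheorem9:
  fixes emb :: "'a::{finite,field} \<Rightarrow> 'b::{finite,field}"
    and M N :: nat and l1 l2 :: 'a
    and C :: "(nat \<Rightarrow> nat \<Rightarrow> 'a) set" and d :: nat
    and s :: nat and av bv :: "nat \<Rightarrow> 'b"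
    and c e :: "nat \<Rightarrow> nat \<Rightarrow> 'a"
    and t :: nat and ei ej :: "nat \<Rightarrow> nat"
  assumes "field_emb emb"
    and "M \<ge> 1" and "N \<ge> 1"
    and "of_nat M \<noteq> (0::'a)" and "of_nat N \<noteq> (0::'a)"
    and "l1 \<noteq> 0" and "l2 \<noteq> 0"
    and "card {a::'b. a ^ M = emb l1} = M" and "card {b::'b. b ^ N = emb l2} = N"
    and "constacyclic_2D M N l1 l2 C"
    and "is_min_dist M N C d"
    and "V_common emb M N l1 l2 C = {(av k, bv k) | k. k < s}"
    and "inj_on (\<lambda>k. (av k, bv k)) {..<s}"
    and "c \<in> C"
    and "is_array M N e"
    and "{(i, j). i < M \<and> j < N \<and> e i j \<noteq> 0} = {(ei l, ej l) | l. l < t}"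
    and "inj_on (\<lambda>l. (ei l, ej l)) {..<t}"
    and "t \<ge> 1" and "t \<le> (d - 1) div 2"
  shows "(\<exists>k<s. eval2 emb M N (\<lambda>i j. c i j + e i j) (av k) (bv k) \<noteq> 0) \<and>
         (\<forall>X :: nat \<Rightarrow> 'b.
            (\<forall>k<s. (\<Sum>l<t. (av k) ^ (ei l) * (bv k) ^ (ej l) * X l)
                    = eval2 emb M N (\<lambda>i j. c i j + e i j) (av k) (bv k))
            \<longleftrightarrow> (\<forall>l<t. X l = emb (e (ei l) (ej l))))"
proof -
  note fe = assms(1) and M = assms(2) and N = assms(3) and cA = assms(8) and cB = assms(9)
    and C = assms(10) and md = assms(11) and Vc = assms(12) and cC = assms(14)
    and earr = assms(15) and supp = assms(16) and inj = assms(17) and t1 = assms(18) and td = assms(19)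
  have td': "t < d" using t1 td by linarith
  have rng: "\<forall>l<t. ei l < M \<and> ej l < N"
  proof (intro allI impI)
    fix l assume "l < t"
    then have "(ei l, ej l) \<in> {(i, j). i < M \<and> j < N \<and> e i j \<noteq> 0}" using supp by blast
    then show "ei l < M \<and> ej l < N" by simp
  qed
  have esupp: "\<forall>i<M. \<forall>j<N. e i j \<noteq> 0 \<longrightarrow> (\<exists>l<t. (i, j) = (ei l, ej l))"
    using supp by blast
  have rval: "eval2 emb M N (\<lambda>i j. c i j + e i j) (av k) (bv k) =
      (\<Sum>l<t. (av k) ^ (ei l) * (bv k) ^ (ej l) * emb (e (ei l) (ej l)))" if k: "k < s" for k
  proof -
    have "(av k, bv k) \<in> V_common emb M N l1 l2 C" using Vc k by blast
    then have "eval2 emb M N c (av k) (bv k) = 0" using cC by (auto simp: V_common_def V_one_def)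
    then show ?thesis
      by (simp add: eval2_add[OF fe] eval_support[OF fe inj rng esupp] algebra_simps)
  qed
  have homog: "\<forall>l<t. D l = 0"
    if D: "\<forall>k<s. (\<Sum>l<t. (av k) ^ (ei l) * (bv k) ^ (ej l) * D l) = 0" for D :: "nat \<Rightarrow> 'b"
  proof -
    define Y where "Y = (\<lambda>i j. \<Sum>l<t. if ei l = i \<and> ej l = j then D l else 0)"
    have Yat: "Y (ei l) (ej l) = D l" if "l < t" for l
    proof -
      have "Y (ei l) (ej l) = (\<Sum>l'<t. if l' = l then D l' else 0)"
        unfolding Y_def
      proof (intro sum.cong refl)
        fix l' assume "l' \<in> {..<t}"
        then show "(if ei l' = ei l \<and> ej l' = ej l then D l' else 0) = (if l' = l then D l' else 0)"
          using inj that unfolding inj_on_def by auto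
      qed
      also have "\<dots> = D l" using that by simp
      finally show ?thesis .
    qed
    have Ysupp: "Y i j \<noteq> 0 \<Longrightarrow> \<exists>l<t. (i, j) = (ei l, ej l)" for i j
    proof (rule ccontr)
      assume "Y i j \<noteq> 0" "\<not> (\<exists>l<t. (i, j) = (ei l, ej l))"
      then show False unfolding Y_def by (auto intro!: sum.neutral)
    qed
    have Yarr: "is_array M N Y" unfolding is_array_def
    proof (intro allI impI)
      fix i j assume "M \<le> i \<or> N \<le> j"
      then show "Y i j = 0" using Ysupp rng by (metis not_le prod.inject)
    qed
    have Yz: "\<forall>P\<in>V_common emb M N l1 l2 C. eval2 id M N Y (fst P) (snd P) = 0"
    proof
      fix P assume "P \<in> V_common emb M N l1 l2 C"
      then obtain k where k: "k < s" "P = (av k, bv k)" using Vc by blast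
      have "eval2 id M N Y (fst P) (snd P) = (\<Sum>l<t. (av k) ^ (ei l) * (bv k) ^ (ej l) * D l)"
        using eval_support[OF field_emb_id inj rng, of Y] Ysupp k Yat
        by (simp add: algebra_simps)
      then show "eval2 id M N Y (fst P) (snd P) = 0" using D k by simp
    qed
    have "{(i, j). i < M \<and> j < N \<and> Y i j \<noteq> 0} \<subseteq> (\<lambda>l. (ei l, ej l)) ` {..<t}"
      using Ysupp by blast
    then have "card {(i, j). i < M \<and> j < N \<and> Y i j \<noteq> 0} \<le> card ((\<lambda>l. (ei l, ej l)) ` {..<t})"
      by (intro card_mono) auto
    also have "\<dots> \<le> t" using card_image_le[of "{..<t}"] by simp
    finally have Ys: "card {(i, j). i < M \<and> j < N \<and> Y i j \<noteq> 0} < d" using td' by linarith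
    have "Y = (\<lambda>i j. 0)" by (rule core_zero[OF fe M N cA cB C md Yarr Yz Ys])
    then show ?thesis using Yat by (metis)
  qed
  have iff: "(\<forall>k<s. (\<Sum>l<t. (av k) ^ (ei l) * (bv k) ^ (ej l) * X l)
                    = eval2 emb M N (\<lambda>i j. c i j + e i j) (av k) (bv k))
            \<longleftrightarrow> (\<forall>l<t. X l = emb (e (ei l) (ej l)))" for X
  proof
    assume H: "\<forall>k<s. (\<Sum>l<t. (av k) ^ (ei l) * (bv k) ^ (ej l) * X l)
                    = eval2 emb M N (\<lambda>i j. c i j + e i j) (av k) (bv k)"
    have "\<forall>l<t. X l - emb (e (ei l) (ej l)) = 0"
    proof (rule homog, intro allI impI)
      fix k assume k: "k < s"
      have "(\<Sum>l<t. (av k) ^ (ei l) * (bv k) ^ (ej l) * (X l - emb (e (ei l) (ej l)))) =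
         (\<Sum>l<t. (av k) ^ (ei l) * (bv k) ^ (ej l) * X l) - (\<Sum>l<t. (av k) ^ (ei l) * (bv k) ^ (ej l) * emb (e (ei l) (ej l)))"
        by (simp add: sum_subtractf algebra_simps)
      then show "(\<Sum>l<t. (av k) ^ (ei l) * (bv k) ^ (ej l) * (X l - emb (e (ei l) (ej l)))) = 0"
        using H k rval[OF k] by simp
    qed
    then show "\<forall>l<t. X l = emb (e (ei l) (ej l))" by simp
  next
    assume H: "\<forall>l<t. X l = emb (e (ei l) (ej l))"
    show "\<forall>k<s. (\<Sum>l<t. (av k) ^ (ei l) * (bv k) ^ (ej l) * X l)
                    = eval2 emb M N (\<lambda>i j. c i j + e i j) (av k) (bv k)"
      using H rval by simp
  qed
  have nh: "\<exists>k<s. eval2 emb M N (\<lambda>i j. c i j + e i j) (av k) (bv k) \<noteq> 0"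
  proof (rule ccontr)
    assume "\<not> ?thesis"
    then have "\<forall>k<s. (\<Sum>l<t. (av k) ^ (ei l) * (bv k) ^ (ej l) * (0::'b))
                    = eval2 emb M N (\<lambda>i j. c i j + e i j) (av k) (bv k)" by simp
    then have "\<forall>l<t. (0::'b) = emb (e (ei l) (ej l))" using iff[of "\<lambda>_. 0"] by simp
    then have "emb (e (ei 0) (ej 0)) = emb 0" using t1 femb_simps(1)[OF fe] by simp
    then have "e (ei 0) (ej 0) = 0" using femb_simps(5)[OF fe] by (simp add: inj_eq)
    moreover have "(ei 0, ej 0) \<in> {(i, j). i < M \<and> j < N \<and> e i j \<noteq> 0}" using supp t1 by auto
    ultimately show False by simp
  qed
  show ?thesis using nh iff by blast
qed

end
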